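(* Let $a_1,\dots,a_n$ be nonzero integers and suppose the equation $$a_1x_1+\cdots+a_nx_n=0$$ is $r$-regular. Let $C$ be a positive constant. Then for every coloring of the positive integers $\mathbb{N}$ with $r$ colors, there exist positive integers $x_1,\dots,x_n$ satisfying $a_1x_1+\cdots+a_nx_n=0$ and a positive integer $d$ such that all the numbers $$x_i+\lambda d,\qquad 1\le i\le n,\ \lambda\in\mathbb{Z},\ |\lambda|\le C,$$ have the same color.
   Context: For a positive integer $r$, a linear homogeneous equation $a_1x_1+\cdots+a_nx_n=0$ with nonzero integer coefficients is called $r$-regular if for every coloring of the positive integers with $r$ colors there exist positive integers $x_1,\dots,x_n$, all of the same color, satisfying the equation. *)

theory Defs
  imports Complex_Main
begin

text \<open>An r-colouring of the positive integers: a map from int to colours {0..<r},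
 only the values at positive arguments matter.\<close>

definition r_regular :: "nat \<Rightarrow> nat \<Rightarrow> (nat \<Rightarrow> int) \<Rightarrow> bool" where
  "r_regular r n a \<longleftrightarrow>
     (\<forall>c :: int \<Rightarrow> nat. (\<forall>y>0. c y < r) \<longrightarrow>
        (\<exists>x :: nat \<Rightarrow> int. (\<forall>i<n. x i > 0) \<and> (\<Sum>i<n. a i * x i) = 0 \<and>
           (\<exists>k. \<forall>i<n. c (x i) = k)))"

end

theory Submission imports Defs "HOL-Library.Countable" begin

definition vdw :: "nat \<Rightarrow> bool" where
"vdw k \<longleftrightarrow> (\<forall>S::nat set. finite S \<longrightarrow> (\<exists>W. \<forall>f. range f \<subseteq> S \<longrightarrow>
   (\<exists>a d. d > 0 \<and> a + k*d \<le> W \<and> (\<forall>i<k. f (a+i*d) = f a))))"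

definition C1 :: "nat \<Rightarrow> (nat \<Rightarrow> nat) \<Rightarrow> nat \<Rightarrow> bool" where
"C1 k f N \<longleftrightarrow> (\<exists>a d. d > 0 \<and> a + Suc k * d \<le> N \<and> (\<forall>i\<le>k. f (a+i*d) = f a))"

definition Fam :: "nat \<Rightarrow> (nat \<Rightarrow> nat) \<Rightarrow> nat \<Rightarrow> nat \<Rightarrow> bool" where
"Fam k f N s \<longleftrightarrow> (\<exists>F col A D. F \<le> N \<and> inj_on (col::nat\<Rightarrow>nat) {..<s} \<and>
   (\<forall>j<s. D j > 0 \<and> A j + k * D j = F \<and> (\<forall>i<k. f (A j + i * D j) = col j)))"

lemma Q_step:
  assumes k1: "k \<ge> 1" and vk: "vdw k" and fin: "finite S"
    and Qs: "\<exists>N. \<forall>f. range f \<subseteq> S \<longrightarrow> C1 k f N \<or> Fam k f N s"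
  shows "\<exists>N. \<forall>f. range f \<subseteq> S \<longrightarrow> C1 k f N \<or> Fam k f N (Suc s)"
proof -
  obtain N where HN: "\<forall>f. range f \<subseteq> S \<longrightarrow> C1 k f N \<or> Fam k f N s" using Qs by blast
  define L where "L = Suc N"
  define T where "T = to_nat ` {xs::nat list. set xs \<subseteq> S \<and> length xs = L}"
  have finT: "finite T" unfolding T_def using finite_lists_length_eq[OF fin] by blast
  from vk finT obtain M where HM: "\<forall>g. range g \<subseteq> T \<longrightarrow> (\<exists>b e. e > 0 \<and> b + k*e \<le> M \<and> (\<forall>i<k. g (b+i*e) = g b))"
    unfolding vdw_def by blast
  show ?thesis
  proof (rule exI[of _ "L*M + 2*N"], intro allI impI)
    fix f :: "nat \<Rightarrow> nat" assume rf: "range f \<subseteq> S"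
    define g where "g b = to_nat (map (\<lambda>x. f (L*b+x)) [0..<L])" for b
    have "range g \<subseteq> T"
    proof
      fix y assume "y \<in> range g"
      then obtain b0 where "y = g b0" by blast
      moreover have "map (\<lambda>x. f (L*b0+x)) [0..<L] \<in> {xs. set xs \<subseteq> S \<and> length xs = L}" using rf by auto
      ultimately show "y \<in> T" unfolding g_def T_def by blast
    qed
    then obtain b e where e0: "e > 0" and bM: "b + k*e \<le> M" and gb: "\<forall>i<k. g (b+i*e) = g b"
      using HM by blast
    have blk: "f (L*(b+i*e)+x) = f (L*b+x)" if "i < k" "x < L" for i x
    proof -
      have "map (\<lambda>x. f (L*(b+i*e)+x)) [0..<L] = map (\<lambda>x. f (L*b+x)) [0..<L]"
        using gb that unfolding g_def by auto
      then have "\<forall>x\<in>set [0..<L]. f (L*(b+i*e)+x) = f (L*b+x)" by (simp only: map_eq_conv)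
      then show ?thesis using that by simp
    qed
    define f' where "f' x = f (L*b+x)" for x
    have "range f' \<subseteq> S" unfolding f'_def using rf by auto
    then have "C1 k f' N \<or> Fam k f' N s" using HN by blast
    have bleM: "b \<le> M" using bM by simp
    have LbM: "L*b \<le> L*M" using bleM by simp
    show "C1 k f (L*M + 2*N) \<or> Fam k f (L*M + 2*N) (Suc s)"
    proof (cases "C1 k f' N")
      case True
      then obtain a d where d0: "d > 0" and ad: "a + Suc k * d \<le> N" and fa: "\<forall>i\<le>k. f' (a+i*d) = f' a"
        unfolding C1_def by blast
      have b1: "L * b + a + Suc k * d \<le> L * M + 2 * N" using ad LbM by linarith
      have b2: "\<forall>i\<le>k. f (L*b+a+i*d) = f (L*b+a)" using fa by (simp add: f'_def add.assoc)
      have "C1 k f (L*M + 2*N)" unfolding C1_def using d0 b1 b2 by blast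
      then show ?thesis by blast
    next
      case False
      then have "Fam k f' N s" using \<open>C1 k f' N \<or> Fam k f' N s\<close> by blast
      then obtain F col A D where FN: "F \<le> N" and inj: "inj_on (col::nat\<Rightarrow>nat) {..<s}"
        and fam: "\<forall>j<s. D j > 0 \<and> A j + k * D j = F \<and> (\<forall>i<k. f' (A j + i * D j) = col j)"
        unfolding Fam_def by blast
      have Ale: "A j + i * D j \<le> F" if "j < s" "i \<le> k" for j i
      proof -
        have "i * D j \<le> k * D j" using that by simp
        then show ?thesis using fam that by force
      qed
      show ?thesis
      proof (cases "\<exists>j<s. col j = f' F")
        case True
        then obtain j where js: "j < s" and cj: "col j = f' F" by blast
        have DF: "D j \<le> F"
        proof -
          have "D j \<le> k * D j" using k1 by simp
          then show ?thesis using fam js by (metis le_add2 order_trans)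
        qed
        have "C1 k f (L*M + 2*N)" unfolding C1_def
        proof (rule exI[of _ "L*b + A j"], rule exI[of _ "D j"], intro conjI allI impI)
          show "D j > 0" using fam js by blast
          show "L * b + A j + Suc k * D j \<le> L * M + 2 * N"
          proof -
            have "A j + k * D j = F" using fam js by blast
            then have "L * b + A j + Suc k * D j = L*b + F + D j" by simp
            then show ?thesis using DF FN LbM by linarith
          qed
          fix i assume ik: "i \<le> k"
          have k0: "0 < k" using k1 by simp
          have c0: "f (L*b + A j) = col j" using fam js k0 by (force simp: f'_def)
          show "f (L * b + A j + i * D j) = f (L * b + A j)"
          proof (cases "i < k")
            case True then show ?thesis using fam js c0 by (auto simp: f'_def add.assoc)
          next
            case False then have "i = k" using ik by simp
            then show ?thesis using fam js c0 cj by (auto simp: f'_def add.assoc)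
          qed
        qed
        then show ?thesis by blast
      next
        case False
        define col' where "col' = col(s := f' F)"
        define A' where "A' j = (if j < s then L*b + A j else L*b + F)" for j
        define D' where "D' j = (if j < s then D j + L*e else L*e)" for j
        have "Fam k f (L*M + 2*N) (Suc s)" unfolding Fam_def
        proof (rule exI[of _ "L*(b+k*e) + F"], rule exI[of _ col'], rule exI[of _ A'], rule exI[of _ D'], intro conjI allI impI)
          have "L*(b+k*e) \<le> L*M" using bM by simp
          then show "L * (b + k * e) + F \<le> L * M + 2 * N" using FN by linarith
          have cc: "\<forall>x\<in>{..<s}. col' x = col x" by (simp add: col'_def)
          have i1: "inj_on col' {..<s}" using inj_on_cong[of "{..<s}" col' col] cc inj by simp
          have im: "col' ` {..<s} = col ` {..<s}" using cc by simp
          have "col' s \<notin> col' ` {..<s}" unfolding im using False by (auto simp: col'_def)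
          then have "inj_on col' (insert s {..<s})" using i1 by simp
          then show "inj_on col' {..<Suc s}" by (simp add: lessThan_Suc)
          fix j assume js: "j < Suc s"
          show "D' j > 0" unfolding D'_def using fam e0 by (auto simp: L_def)
          show "A' j + k * D' j = L * (b + k * e) + F"
            unfolding A'_def D'_def using fam js by (auto simp: algebra_simps)
          fix i assume ik: "i < k"
          show "f (A' j + i * D' j) = col' j"
            proof (cases "j < s")
              case True
              have lt: "A j + i * D j < L" using Ale[OF True, of i] ik FN L_def by simp
              have "A' j + i * D' j = L*(b+i*e) + (A j + i * D j)"
                unfolding A'_def D'_def using True by (simp add: algebra_simps)
              then have "f (A' j + i * D' j) = f (L*b + (A j + i * D j))" using blk[OF ik lt] by simp
              also have "\<dots> = col j" using fam True ik by (simp add: f'_def)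
              finally show ?thesis using True col'_def by simp
            next
              case False
              then have jeq: "j = s" using js by simp
              have "A' j + i * D' j = L*(b+i*e) + F"
                unfolding A'_def D'_def using jeq by (simp add: algebra_simps)
              then have "f (A' j + i * D' j) = f (L*b + F)" using blk[OF ik] FN L_def by simp
              then show ?thesis using jeq col'_def f'_def by simp
            qed
        qed
        then show ?thesis by blast
      qed
    qed
  qed
qed

lemma vdw_Suc:
  assumes k1: "k \<ge> 1" and vk: "vdw k"
  shows "vdw (Suc k)"
  unfolding vdw_def
proof (intro allI impI)
  fix S :: "nat set" assume fin: "finite S"
  have Q: "\<exists>N. \<forall>f. range f \<subseteq> S \<longrightarrow> C1 k f N \<or> Fam k f N s" for s
  proof (induction s)
    case 0
    show ?case by (rule exI[of _ 0]) (auto simp: Fam_def)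
  next
    case (Suc s)
    then show ?case using Q_step[OF k1 vk fin] by blast
  qed
  obtain N where HN: "\<forall>f. range f \<subseteq> S \<longrightarrow> C1 k f N \<or> Fam k f N (card S)" using Q by blast
  show "\<exists>W. \<forall>f. range f \<subseteq> S \<longrightarrow> (\<exists>a d. 0 < d \<and> a + Suc k * d \<le> W \<and> (\<forall>i<Suc k. f (a + i * d) = f a))"
  proof (rule exI[of _ "2*N"], intro allI impI)
    fix f :: "nat \<Rightarrow> nat" assume rf: "range f \<subseteq> S"
    show "\<exists>a d. 0 < d \<and> a + Suc k * d \<le> 2*N \<and> (\<forall>i<Suc k. f (a + i * d) = f a)"
    proof (cases "C1 k f N")
      case True
      then show ?thesis unfolding C1_def
        by (metis less_Suc_eq_le mult_2 trans_le_add1)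
    next
      case False
      then have "Fam k f N (card S)" using HN rf by blast
      then obtain F col A D where FN: "F \<le> N" and inj: "inj_on (col::nat\<Rightarrow>nat) {..<card S}"
        and fam: "\<forall>j<card S. D j > 0 \<and> A j + k * D j = F \<and> (\<forall>i<k. f (A j + i * D j) = col j)"
        unfolding Fam_def by blast
      have sub: "col ` {..<card S} \<subseteq> S"
      proof
        fix y assume "y \<in> col ` {..<card S}"
        then obtain j where j: "j < card S" "y = col j" by blast
        then have "f (A j + 0 * D j) = col j" using fam k1 by (metis less_le_trans zero_less_one)
        then show "y \<in> S" using rf j by (metis range_subsetD)
      qed
      have "card (col ` {..<card S}) = card S" using card_image[OF inj] by simp
      then have eq: "col ` {..<card S} = S" using card_subset_eq[OF fin sub] by simp
      have "f F \<in> S" using rf by auto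
      then obtain j where js: "j < card S" and cj: "col j = f F" using eq by force
      have DF: "D j \<le> F"
      proof -
        have "D j \<le> k * D j" using k1 by simp
        then show ?thesis using fam js by (metis le_add2 order_trans)
      qed
      have k0: "0 < k" using k1 by simp
      have c0: "f (A j) = col j" using fam js k0 by force
      show ?thesis
      proof (rule exI[of _ "A j"], rule exI[of _ "D j"], intro conjI allI impI)
        show "D j > 0" using fam js by blast
        show "A j + Suc k * D j \<le> 2 * N" using fam js DF FN by auto
        fix i assume "i < Suc k"
        then show "f (A j + i * D j) = f (A j)"
          using fam js c0 cj by (cases "i < k") (auto simp: less_Suc_eq)
      qed
    qed
  qed
qed

lemma vdw_all: "vdw k"
proof (induction k)
  case 0 show ?case unfolding vdw_def by (auto intro: exI[of _ 1])
next
  case (Suc k)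
  show ?case
  proof (cases "k = 0")
    case True
    show ?thesis unfolding vdw_def True
      proof (intro allI impI)
      fix S :: "nat set" and f :: "nat \<Rightarrow> nat"
      show "\<exists>W. \<forall>f. range f \<subseteq> S \<longrightarrow> (\<exists>a d. 0 < d \<and> a + Suc 0 * d \<le> W \<and> (\<forall>i<Suc 0. f (a + i * d) = f a))"
        by (rule exI[of _ 1]) (intro allI impI exI[of _ "0::nat"] exI[of _ "1::nat"], simp)
    qed
  next
    case False then show ?thesis using vdw_Suc Suc by simp
  qed
qed


definition good :: "nat \<Rightarrow> (nat \<Rightarrow> int) \<Rightarrow> nat \<Rightarrow> (int \<Rightarrow> nat) \<Rightarrow> bool" where
"good n a N c \<longleftrightarrow> (\<exists>x. (\<forall>i<n. 0 < x i \<and> x i \<le> int N) \<and> (\<Sum>i<n. a i * x i) = 0 \<and> (\<exists>k. \<forall>i<n. c (x i) = k))"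

lemma good_mono: "good n a M c \<Longrightarrow> M \<le> M' \<Longrightarrow> good n a M' c"
  unfolding good_def by (meson of_nat_le_iff order_trans)

lemma compactness:
  assumes reg: "r_regular r n a"
  shows "\<exists>N. \<forall>c. (\<forall>y>0. c y < r) \<longrightarrow> good n a N c"
proof (rule ccontr)
  assume "\<not> ?thesis"
  then have bad: "\<forall>N. \<exists>c. (\<forall>y>0. c y < r) \<and> \<not> good n a N c" by blast
  define E where "E N p \<longleftrightarrow> (\<forall>M. \<exists>c. (\<forall>y>0. c y < r) \<and> \<not> good n a M c \<and> (\<forall>y. 0 < y \<and> y \<le> int N \<longrightarrow> c y = p y))" for N p
  have E0: "E 0 p" for p unfolding E_def using bad by auto
  have Estep: "\<exists>v<r. E (Suc N) (p(int N + 1 := v))" if EN: "E N p" for N p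
  proof (rule ccontr)
    assume "\<not> (\<exists>v<r. E (Suc N) (p(int N + 1 := v)))"
    then have "\<forall>v<r. \<exists>M. \<forall>c. (\<forall>y>0. c y < r) \<and> \<not> good n a M c \<longrightarrow>
         \<not> (\<forall>y. 0 < y \<and> y \<le> int (Suc N) \<longrightarrow> c y = (p(int N + 1 := v)) y)"
      unfolding E_def by blast
    then obtain Mf where Mf: "\<forall>v<r. \<forall>c. (\<forall>y>0. c y < r) \<and> \<not> good n a (Mf v) c \<longrightarrow>
         \<not> (\<forall>y. 0 < y \<and> y \<le> int (Suc N) \<longrightarrow> c y = (p(int N + 1 := v)) y)"
      by metis
    define M where "M = Max (insert 0 (Mf ` {..<r}))"
    have Mge: "Mf v \<le> M" if "v < r" for v unfolding M_def using that by simp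
    obtain c where cr: "\<forall>y>0. c y < r" and cb: "\<not> good n a M c"
      and ca: "\<forall>y. 0 < y \<and> y \<le> int N \<longrightarrow> c y = p y"
      using EN unfolding E_def by blast
    define v where "v = c (int N + 1)"
    have vr: "v < r" using cr v_def by simp
    have "\<not> good n a (Mf v) c" using cb good_mono Mge[OF vr] by blast
    moreover have "\<forall>y. 0 < y \<and> y \<le> int (Suc N) \<longrightarrow> c y = (p(int N + 1 := v)) y"
      using ca v_def by auto
    ultimately show False using Mf vr cr by blast
  qed
  define P where "P = rec_nat (\<lambda>_. 0::nat) (\<lambda>N q. q(int N + 1 := (SOME v. v < r \<and> E (Suc N) (q(int N + 1 := v)))))"
  have P0: "P 0 = (\<lambda>_. 0)" unfolding P_def by simp
  have PS: "P (Suc N) = (P N)(int N + 1 := (SOME v. v < r \<and> E (Suc N) ((P N)(int N + 1 := v))))" for N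
    unfolding P_def by simp
  have sv: "(SOME v. v < r \<and> E (Suc N) ((P N)(int N + 1 := v))) < r \<and>
              E (Suc N) ((P N)(int N + 1 := (SOME v. v < r \<and> E (Suc N) ((P N)(int N + 1 := v)))))"
    if "E N (P N)" for N
  proof -
    have ex: "\<exists>v. v < r \<and> E (Suc N) ((P N)(int N + 1 := v))" using Estep that by blast
    show ?thesis using someI_ex[OF ex] .
  qed
  have EP: "E N (P N)" for N
  proof (induction N)
    case 0 then show ?case using E0 P0 by simp
  next
    case (Suc N)
    show ?case unfolding PS using sv[OF Suc] by blast
  qed
  have stab: "P K y = P N y" if "0 < y" "y \<le> int N" "N \<le> K" for N K y
    using that(3)
  proof (induction K rule: dec_induct)
    case base then show ?case by simp
  next
    case (step K) then show ?case using that by (simp add: PS)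
  qed
  define cl where "cl y = P (nat y) y" for y
  have clr: "\<forall>y>0. cl y < r"
  proof (intro allI impI)
    fix y :: int assume y0: "0 < y"
    have "nat y = Suc (nat y - 1)" using y0 by simp
    then have "cl y = P (Suc (nat y - 1)) (int (nat y - 1) + 1)" unfolding cl_def using y0 by simp
    also have "\<dots> < r" unfolding PS using sv[OF EP] by simp
    finally show "cl y < r" .
  qed
  have clP: "cl y = P N y" if "0 < y" "y \<le> int N" for y N
    unfolding cl_def using stab[of y "nat y" N] that by simp
  obtain x where xpos: "\<forall>i<n. x i > 0" and xs: "(\<Sum>i<n. a i * x i) = 0"
      and k: "\<exists>k. \<forall>i<n. cl (x i) = k"
    using reg clr unfolding r_regular_def by blast
  define M where "M = nat (\<Sum>i<n. x i)"
  have xle: "x i \<le> int M" if "i < n" for i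
  proof -
    have "x i \<le> (\<Sum>i<n. x i)" using that xpos
      by (intro member_le_sum) (auto simp: less_imp_le)
    then show ?thesis unfolding M_def by simp
  qed
  obtain c where cb: "\<not> good n a M c" and ca: "\<forall>y. 0 < y \<and> y \<le> int M \<longrightarrow> c y = P M y"
    using EP[of M] unfolding E_def by blast
  have "good n a M c" unfolding good_def
  proof (rule exI[of _ x], intro conjI)
    show "\<forall>i<n. 0 < x i \<and> x i \<le> int M" using xpos xle by blast
    show "(\<Sum>i<n. a i * x i) = 0" by (rule xs)
    show "\<exists>k. \<forall>i<n. c (x i) = k" using k ca clP xpos xle by metis
  qed
  then show False using cb by blast
qed


theorem lemma1:
  fixes r n :: nat and a :: "nat \<Rightarrow> int" and C :: real and c :: "int \<Rightarrow> nat"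
  assumes "r > 0"
    and "\<forall>i<n. a i \<noteq> 0"
    and "r_regular r n a"
    and "C > 0"
    and "\<forall>y>0. c y < r"
  shows "\<exists>x :: nat \<Rightarrow> int. \<exists>d :: int. d > 0 \<and> (\<forall>i<n. x i > 0) \<and> (\<Sum>i<n. a i * x i) = 0 \<and>
           (\<exists>k. \<forall>i<n. \<forall>l::int. real_of_int \<bar>l\<bar> \<le> C \<longrightarrow>
               x i + l * d > 0 \<and> c (x i + l * d) = k)"
proof -
  note reg = assms(3) and cr = assms(5)
  obtain N where HN: "\<forall>c. (\<forall>y>0. c y < r) \<longrightarrow> good n a N c" using compactness[OF reg] by blast
  define m where "m = nat \<lfloor>C\<rfloor>"
  have lm: "\<bar>l\<bar> \<le> int m" if "real_of_int \<bar>l\<bar> \<le> C" for l :: int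
  proof -
    have "\<bar>l\<bar> \<le> \<lfloor>C\<rfloor>" using that by (simp add: le_floor_iff)
    then show ?thesis unfolding m_def using assms(4) by simp
  qed
  define K where "K = m * fact N"
  define S where "S = to_nat ` {xs::nat list. set xs \<subseteq> {..<r} \<and> length xs = N}"
  have finS: "finite S" unfolding S_def using finite_lists_length_eq[of "{..<r}" N] by blast
  define g where "g t = to_nat (map (\<lambda>j. c (int (Suc t) * int j)) [1..<Suc N])" for t
  have "range g \<subseteq> S"
  proof
    fix y assume "y \<in> range g"
    then obtain t where yt: "y = g t" by blast
    have "map (\<lambda>j. c (int (Suc t) * int j)) [1..<Suc N] \<in> {xs. set xs \<subseteq> {..<r} \<and> length xs = N}"
      using cr by auto
    then show "y \<in> S" unfolding yt g_def S_def by blast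
  qed
  then have rg: "range g \<subseteq> S" .
  obtain W where HW: "\<forall>f. range f \<subseteq> S \<longrightarrow> (\<exists>a d. d > 0 \<and> a + Suc (2*K)*d \<le> W \<and> (\<forall>i<Suc (2*K). f (a+i*d) = f a))"
    using vdw_all[of "Suc (2*K)"] finS unfolding vdw_def by blast
  obtain b e where e0: "e > 0" and gb: "\<forall>i<Suc (2*K). g (b+i*e) = g b"
    using HW[rule_format, OF rg] by blast
  define t0 where "t0 = b + K*e"
  have vec: "c (int (Suc (b+i*e)) * int j) = c (int (Suc t0) * int j)"
    if "i < Suc (2*K)" "1 \<le> j" "j \<le> N" for i j
  proof -
    have Kl: "K < Suc (2*K)" by simp
    have "g (b+i*e) = g b" using gb that(1) by blast
    moreover have "g (b+K*e) = g b" using gb Kl by blast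
    ultimately have "g (b+i*e) = g t0" unfolding t0_def by simp
    then have "map (\<lambda>j. c (int (Suc (b+i*e)) * int j)) [1..<Suc N] = map (\<lambda>j. c (int (Suc t0) * int j)) [1..<Suc N]"
      unfolding g_def by simp
    then have "\<forall>j\<in>set [1..<Suc N]. c (int (Suc (b+i*e)) * int j) = c (int (Suc t0) * int j)"
      by (simp only: map_eq_conv)
    moreover have jin: "j \<in> set [1..<Suc N]" using that(2,3) le_imp_less_Suc by auto
    ultimately show ?thesis by (rule bspec)
  qed
  define c' where "c' y = c (int (Suc t0) * y)" for y
  have "\<forall>y>0. c' y < r" unfolding c'_def using cr by simp
  then have "good n a N c'" using HN by blast
  then obtain x' k where x'b: "\<forall>i<n. 0 < x' i \<and> x' i \<le> int N" and x's: "(\<Sum>i<n. a i * x' i) = 0"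
    and x'k: "\<forall>i<n. c' (x' i) = k"
    unfolding good_def by blast
  define T where "T = int (Suc t0)"
  define x where "x i = T * x' i" for i
  define d where "d = int e * int (fact N)"
  show ?thesis
  proof (rule exI[of _ x], rule exI[of _ d], intro conjI)
    show "d > 0" unfolding d_def using e0 by simp
    show "\<forall>i<n. x i > 0" unfolding x_def T_def using x'b by simp
    have "(\<Sum>i<n. a i * x i) = T * (\<Sum>i<n. a i * x' i)"
      unfolding x_def by (simp add: sum_distrib_left algebra_simps)
    then show "(\<Sum>i<n. a i * x i) = 0" using x's by simp
    show "\<exists>k. \<forall>i<n. \<forall>l::int. real_of_int \<bar>l\<bar> \<le> C \<longrightarrow> x i + l * d > 0 \<and> c (x i + l * d) = k"
    proof (rule exI[of _ k], intro allI impI)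
      fix i l assume i: "i < n" and lC: "real_of_int \<bar>l\<bar> \<le> C"
      define jn where "jn = nat (x' i)"
      have j1: "1 \<le> jn" and jN: "jn \<le> N" and xj: "x' i = int jn" using x'b i unfolding jn_def by auto
      have "jn dvd fact N" using j1 jN by (simp add: dvd_fact)
      then obtain q where fq: "fact N = jn * q" by blast
      have qle: "q \<le> fact N" using fq j1 by (metis le_add2 mult_le_mono1 mult_1 le_Suc_ex)
      define l' where "l' = l * int q"
      have "\<bar>l'\<bar> \<le> int m * int q" unfolding l'_def using lm[OF lC] by (simp add: abs_mult mult_right_mono)
      also have "\<dots> \<le> int m * int (fact N)" using qle by (intro mult_left_mono) (simp only: of_nat_le_iff, simp)
      also have "\<dots> = int K" unfolding K_def by (simp only: of_nat_mult)
      finally have l'K: "\<bar>l'\<bar> \<le> int K" .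
      define i' where "i' = nat (int K + l')"
      have i'eq: "int i' = int K + l'" unfolding i'_def using l'K by simp
      have i'lt: "i' < Suc (2*K)" using i'eq l'K by linarith
      have eq: "x i + l * d = int (Suc (b+i'*e)) * int jn"
      proof -
        have "int (Suc (b+i'*e)) = int b + 1 + (int K + l') * int e" using i'eq by simp
        moreover have "x i + l * d = (int b + int K * int e + 1) * int jn + l * (int e * (int jn * int q))"
          unfolding x_def T_def d_def t0_def xj using fq by (simp add: of_nat_mult)
        ultimately show ?thesis unfolding l'_def by (simp add: algebra_simps)
      qed
      have jp: "0 < jn" using j1 by simp
      have "0 < int (Suc (b+i'*e)) * int jn" using jp by (simp only: of_nat_0_less_iff zero_less_Suc mult_pos_pos)
      then have pos: "x i + l * d > 0" using eq by simp
      have "c (x i + l * d) = c (int (Suc t0) * int jn)" unfolding eq using vec[OF i'lt j1 jN] .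
      also have "\<dots> = k" using x'k i xj unfolding c'_def by metis
      finally show "x i + l * d > 0 \<and> c (x i + l * d) = k" using pos by blast
    qed
  qed
qed

end
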